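(* Let $p$ be a prime number, $J$ a positive integer, and $G$ a finite group. Let $\tilde A$ be a normal subgroup of $G$ of index at most $J$, and suppose $\tilde A$ is abelian (respectively, nilpotent of class at most $c$). Then $G$ contains a normal subgroup $A$ such that the minimal number of generators of $A$ does not exceed that of $\tilde A$, the order of $A$ is coprime to $p$, the index of $A$ in $G$ is at most $J\cdot|G_p|$ where $G_p$ is a $p$-Sylow subgroup of $G$, and $A$ is abelian (respectively, nilpotent of class at most $c$).
   Context: A group is nilpotent of class at most $c$ if its upper central series has length at most $c$. *)

theory Defs
  imports "HOL-Algebra.Algebra" "HOL-Computational_Algebra.Primes"
begin

definition min_gens :: "('a, 'b) monoid_scheme \<Rightarrow> 'a set \<Rightarrow> nat" where
  "min_gens G H = (LEAST n. \<exists>S. finite S \<and> S \<subseteq> H \<and> card S = n \<and> generate G S = H)"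

text \<open>Upper central series of a group K: Z_0 = 1, and Z_(i+1) is the preimage of the
  centre of K / Z_i.\<close>
fun upper_central :: "('a, 'b) monoid_scheme \<Rightarrow> nat \<Rightarrow> 'a set" where
  "upper_central K 0 = {\<one>\<^bsub>K\<^esub>}"
| "upper_central K (Suc i) =
     {x \<in> carrier K. \<forall>y \<in> carrier K.
        x \<otimes>\<^bsub>K\<^esub> y \<otimes>\<^bsub>K\<^esub> inv\<^bsub>K\<^esub> x \<otimes>\<^bsub>K\<^esub> inv\<^bsub>K\<^esub> y \<in> upper_central K i}"

definition nilpotent_class_le :: "('a, 'b) monoid_scheme \<Rightarrow> nat \<Rightarrow> bool" where
  "nilpotent_class_le K c \<longleftrightarrow> upper_central K c = carrier K"

end

theory Submission
  imports Defs
begin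


lemma (in group) pow_coprime_one:
  assumes "x \<in> carrier G" "x [^] (a::nat) = \<one>" "x [^] (b::nat) = \<one>" "coprime a b"
  shows "x = \<one>"
proof -
  have "ord x dvd a" "ord x dvd b" using assms pow_eq_id by auto
  hence "ord x dvd gcd a b" by simp
  hence "ord x = 1" using assms(4) by simp
  thus ?thesis using ord_eq_1 assms(1) by simp
qed

lemma (in group) quot_lemma:
  assumes "finite (carrier G)" "S \<lhd> G" "order G = card S * r" "coprime k r" "t \<in> carrier G" "t [^] (k::nat) = \<one>"
  shows "t \<in> S"
proof -
  interpret N: normal S G by fact
  have gF: "group (G Mod S)" by (rule N.factorgroup_is_group)
  have "card (rcosets S) * card S = order G" using lagrange N.subgroup_axioms by blast
  hence "order (G Mod S) * card S = card S * r" using assms(3) by (simp add: order_def FactGroup_def)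
  moreover have "card S \<noteq> 0"
    using N.subgroup_axioms assms(1) subgroup.finite_imp_card_positive by blast
  ultimately have oF: "order (G Mod S) = r" by simp
  have hom: "group_hom G (G Mod S) (\<lambda>a. S #> a)"
    using N.r_coset_hom_Mod gF by (simp add: group_hom_def group_hom_axioms_def is_group)
  have tc: "S #> t \<in> carrier (G Mod S)"
    using hom assms(5) group_hom.hom_closed by fastforce
  have "(S #> t) [^]\<^bsub>G Mod S\<^esub> k = S #> (t [^] k)"
    using group_hom.hom_nat_pow[OF hom assms(5)] by simp
  also have "\<dots> = S #> \<one>" using assms(6) by simp
  also have "\<dots> = \<one>\<^bsub>G Mod S\<^esub>" using N.subgroup_axioms coset_mult_one subgroup.subset by force
  finally have 1: "(S #> t) [^]\<^bsub>G Mod S\<^esub> k = \<one>\<^bsub>G Mod S\<^esub>" .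
  have 2: "(S #> t) [^]\<^bsub>G Mod S\<^esub> r = \<one>\<^bsub>G Mod S\<^esub>"
    using group.pow_order_eq_1[OF gF tc] oF by simp
  have "S #> t = \<one>\<^bsub>G Mod S\<^esub>"
    using group.pow_coprime_one[OF gF tc 1 2 assms(4)] .
  hence "S #> t = S" by simp
  thus ?thesis using coset_join1 assms(5) N.subgroup_axioms by blast
qed



lemma (in group) conj_pow:
  assumes "x \<in> carrier G" "s \<in> carrier G"
  shows "(x \<otimes> s \<otimes> inv x) [^] (n::nat) = x \<otimes> s [^] n \<otimes> inv x"
proof (induction n)
  case 0
  then show ?case using assms by simp
next
  case (Suc n)
  have "(x \<otimes> s \<otimes> inv x) [^] Suc n = (x \<otimes> s [^] n \<otimes> inv x) \<otimes> (x \<otimes> s \<otimes> inv x)"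
    using Suc by simp
  also have "\<dots> = x \<otimes> (s [^] n \<otimes> s) \<otimes> inv x"
  proof -
    have c: "inv x \<otimes> (x \<otimes> y) = y" if "y \<in> carrier G" for y
      using that by (simp add: m_assoc[symmetric] assms)
    show ?thesis using assms by (simp add: m_assoc c)
  qed
  finally show ?case by simp
qed

lemma (in group) normalizer_cond:
  assumes "upper_central G c = carrier G" "subgroup H G" "H \<noteq> carrier G"
  shows "\<exists>z\<in>carrier G - H. \<forall>h\<in>H. z \<otimes> h \<otimes> inv z \<in> H"
proof -
  have HG: "H \<subseteq> carrier G" using assms(2) subgroup.subset by blast
  have ex: "\<exists>i. \<not> upper_central G i \<subseteq> H"
  proof
    show "\<not> upper_central G c \<subseteq> H" using assms(1,3) HG by blast
  qed
  define i0 where "i0 = (LEAST i. \<not> upper_central G i \<subseteq> H)"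
  have i0: "\<not> upper_central G i0 \<subseteq> H" unfolding i0_def by (rule LeastI_ex[OF ex])
  have "i0 \<noteq> 0"
  proof
    assume "i0 = 0"
    hence "upper_central G i0 = {\<one>}" by simp
    moreover have "\<one> \<in> H" by (rule subgroup.one_closed[OF assms(2)])
    ultimately show False using i0 by simp
  qed
  then obtain j where j: "i0 = Suc j" using not0_implies_Suc by blast
  have jH: "upper_central G j \<subseteq> H"
  proof -
    have "j < i0" using j by simp
    hence "\<not> \<not> upper_central G j \<subseteq> H"
      unfolding i0_def by (rule not_less_Least)
    thus ?thesis by (rule notnotD)
  qed
  have "\<not> upper_central G (Suc j) \<subseteq> H" using i0 j by simp
  then obtain z where z: "z \<in> upper_central G (Suc j)" "z \<notin> H" by (meson subsetI)
  have zc: "z \<in> carrier G" using z by simp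
  have "\<forall>h\<in>H. z \<otimes> h \<otimes> inv z \<in> H"
  proof
    fix h assume h: "h \<in> H"
    have hc: "h \<in> carrier G" using h HG by blast
    have "\<forall>y\<in>carrier G. z \<otimes> y \<otimes> inv z \<otimes> inv y \<in> upper_central G j" using z(1) by simp
    hence "z \<otimes> h \<otimes> inv z \<otimes> inv h \<in> upper_central G j" using hc by blast
    hence "z \<otimes> h \<otimes> inv z \<otimes> inv h \<in> H" using jH by blast
    hence "(z \<otimes> h \<otimes> inv z \<otimes> inv h) \<otimes> h \<in> H" using h subgroup.m_closed[OF assms(2)] by blast
    moreover have "(z \<otimes> h \<otimes> inv z \<otimes> inv h) \<otimes> h = z \<otimes> h \<otimes> inv z"
    proof -
      have ac: "z \<otimes> h \<otimes> inv z \<in> carrier G" using zc hc by simp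
      show ?thesis using m_assoc[OF ac inv_closed[OF hc] hc] l_inv[OF hc] r_one[OF ac] by simp
    qed
    ultimately show "z \<otimes> h \<otimes> inv z \<in> H" by simp
  qed
  thus ?thesis using z zc by blast
qed


lemma (in group) subgroup_pow_card:
  assumes "subgroup S G" "finite S" "s \<in> S"
  shows "s [^] card S = \<one>"
proof -
  have g: "group (G\<lparr>carrier := S\<rparr>)" using subgroup.subgroup_is_group[OF assms(1) is_group] .
  have "s [^]\<^bsub>G\<lparr>carrier := S\<rparr>\<^esub> order (G\<lparr>carrier := S\<rparr>) = \<one>\<^bsub>G\<lparr>carrier := S\<rparr>\<^esub>"
    using group.pow_order_eq_1[OF g] assms(3) by simp
  thus ?thesis by (simp add: order_def nat_pow_consistent[symmetric])
qed

lemma (in group) sylow_normal: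
  assumes fin: "finite (carrier G)" and nil: "upper_central G c = carrier G" and q: "Factorial_Ring.prime (q::nat)"
    and S: "subgroup S G" and cS: "card S = q ^ multiplicity q (order G)"
  shows "S \<lhd> G"
proof -
  define e where "e = multiplicity q (order G)"
  define r where "r = order G div q ^ e"
  have oG: "order G = q ^ e * r" unfolding r_def e_def by (simp add: multiplicity_dvd)
  have "order G \<noteq> 0" using order_gt_0_iff_finite fin by (metis less_irrefl)
  hence nr: "\<not> q dvd r" unfolding r_def e_def
    using multiplicity_decompose[of "order G" q] not_prime_unit q by blast
  hence cop: "coprime (q ^ e) r" using q by (simp add: prime_imp_coprime)
  define N where "N = {g \<in> carrier G. \<forall>s\<in>S. g \<otimes> s \<otimes> inv g \<in> S \<and> inv g \<otimes> s \<otimes> g \<in> S}"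
  have SG: "S \<subseteq> carrier G" using subgroup.subset[OF S] .
  have subN: "subgroup N G"
  proof (rule subgroupI)
    show "N \<subseteq> carrier G" unfolding N_def by blast
    show "N \<noteq> {}"
    proof -
      have "\<one> \<in> N" unfolding N_def using SG by auto
      thus ?thesis by blast
    qed
  next
    fix a assume a: "a \<in> N"
    hence ac: "a \<in> carrier G" unfolding N_def by blast
    show "inv a \<in> N" unfolding N_def using a ac by (simp add: N_def)
  next
    fix a b assume a: "a \<in> N" and b: "b \<in> N"
    hence ac: "a \<in> carrier G" and bc: "b \<in> carrier G" unfolding N_def by blast+
    have "\<forall>s\<in>S. (a \<otimes> b) \<otimes> s \<otimes> inv (a \<otimes> b) \<in> S \<and> inv (a \<otimes> b) \<otimes> s \<otimes> (a \<otimes> b) \<in> S"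
    proof
      fix s assume s: "s \<in> S"
      hence sc: "s \<in> carrier G" using SG by blast
      have e1: "(a \<otimes> b) \<otimes> s \<otimes> inv (a \<otimes> b) = a \<otimes> (b \<otimes> s \<otimes> inv b) \<otimes> inv a"
        using ac bc sc by (simp add: m_assoc inv_mult_group)
      have e2: "inv (a \<otimes> b) \<otimes> s \<otimes> (a \<otimes> b) = inv b \<otimes> (inv a \<otimes> s \<otimes> a) \<otimes> b"
        using ac bc sc by (simp add: m_assoc inv_mult_group)
      have "b \<otimes> s \<otimes> inv b \<in> S" "inv a \<otimes> s \<otimes> a \<in> S" using a b s unfolding N_def by blast+
      hence "a \<otimes> (b \<otimes> s \<otimes> inv b) \<otimes> inv a \<in> S" "inv b \<otimes> (inv a \<otimes> s \<otimes> a) \<otimes> b \<in> S"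
        using a b unfolding N_def by blast+
      thus "(a \<otimes> b) \<otimes> s \<otimes> inv (a \<otimes> b) \<in> S \<and> inv (a \<otimes> b) \<otimes> s \<otimes> (a \<otimes> b) \<in> S"
        using e1 e2 by simp
    qed
    thus "a \<otimes> b \<in> N" unfolding N_def using ac bc by blast
  qed
  have SN: "S \<subseteq> N"
  proof
    fix t assume t: "t \<in> S"
    have tc: "t \<in> carrier G" using t SG by blast
    have "\<forall>s\<in>S. t \<otimes> s \<otimes> inv t \<in> S \<and> inv t \<otimes> s \<otimes> t \<in> S"
    proof
      fix s assume s: "s \<in> S"
      have it: "inv t \<in> S" using subgroup.m_inv_closed[OF S t] .
      show "t \<otimes> s \<otimes> inv t \<in> S \<and> inv t \<otimes> s \<otimes> t \<in> S"
        using subgroup.m_closed[OF S] t s it by blast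
    qed
    thus "t \<in> N" unfolding N_def using tc by blast
  qed
  have finN: "finite N" using fin subgroup.subset[OF subN] finite_subset by blast
  have finS: "finite S" using fin SG finite_subset by blast
  define XN where "XN = G\<lparr>carrier := N\<rparr>"
  have gX: "group XN" unfolding XN_def using subgroup.subgroup_is_group[OF subN is_group] .
  have SX: "S \<lhd> XN"
  proof -
    have sub: "subgroup S XN" unfolding XN_def using subgroup_incl[OF S subN SN] .
    have "\<forall>x\<in>carrier XN. \<forall>h\<in>S. x \<otimes>\<^bsub>XN\<^esub> h \<otimes>\<^bsub>XN\<^esub> inv\<^bsub>XN\<^esub> x \<in> S"
    proof (intro ballI)
      fix x h assume x: "x \<in> carrier XN" and h: "h \<in> S"
      have "inv\<^bsub>XN\<^esub> x = inv x" using x unfolding XN_def using m_inv_consistent[OF subN] by simp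
      moreover have "x \<otimes> h \<otimes> inv x \<in> S" using x h unfolding XN_def N_def by simp
      ultimately show "x \<otimes>\<^bsub>XN\<^esub> h \<otimes>\<^bsub>XN\<^esub> inv\<^bsub>XN\<^esub> x \<in> S" unfolding XN_def by simp
    qed
    thus ?thesis using group.normal_inv_iff[OF gX] sub by blast
  qed
  have NG: "N = carrier G"
  proof (rule ccontr)
    assume ne: "N \<noteq> carrier G"
    obtain z where z: "z \<in> carrier G - N" and zN: "\<forall>h\<in>N. z \<otimes> h \<otimes> inv z \<in> N"
      using normalizer_cond[OF nil subN ne] by blast
    have zc: "z \<in> carrier G" using z by blast
    have fwd: "\<forall>s\<in>S. z \<otimes> s \<otimes> inv z \<in> S"
    proof
      fix s assume s: "s \<in> S"
      have sc: "s \<in> carrier G" using s SG by blast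
      have tN: "z \<otimes> s \<otimes> inv z \<in> N" using zN s SN by blast
      have "s [^] card S = \<one>" using subgroup_pow_card[OF S finS s] .
      hence "(z \<otimes> s \<otimes> inv z) [^] card S = \<one>" using conj_pow[OF zc sc] zc by simp
      hence t1: "(z \<otimes> s \<otimes> inv z) [^]\<^bsub>XN\<^esub> card S = \<one>\<^bsub>XN\<^esub>" unfolding XN_def
        by (simp add: nat_pow_consistent[symmetric])
      have lX: "card (rcosets\<^bsub>XN\<^esub> S) * card S = order XN"
        using group.lagrange[OF gX normal_imp_subgroup[OF SX]] .
      have lG: "card (rcosets N) * card N = order G" using lagrange[OF subN] .
      have "order XN = card N" unfolding XN_def order_def by simp
      hence "card (rcosets N) * card (rcosets\<^bsub>XN\<^esub> S) * q ^ e = q ^ e * r"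
        using lX lG oG cS e_def by (metis mult.commute mult.assoc)
      hence "card (rcosets N) * card (rcosets\<^bsub>XN\<^esub> S) = r" using q by simp
      hence "card (rcosets\<^bsub>XN\<^esub> S) dvd r" by (metis dvd_triv_right)
      hence cop2: "coprime (card S) (card (rcosets\<^bsub>XN\<^esub> S))"
        using cop cS e_def coprime_divisors[of "q^e" "q^e" "card (rcosets\<^bsub>XN\<^esub> S)" r] by simp
      have oX: "order XN = card S * card (rcosets\<^bsub>XN\<^esub> S)" using lX by (simp add: mult.commute)
      have "z \<otimes> s \<otimes> inv z \<in> carrier XN" unfolding XN_def using tN by simp
      thus "z \<otimes> s \<otimes> inv z \<in> S"
        using group.quot_lemma[OF gX _ SX oX cop2 _ t1] finN unfolding XN_def by simp
    qed
    have bwd: "\<forall>s\<in>S. inv z \<otimes> s \<otimes> z \<in> S"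
    proof
      fix s assume s: "s \<in> S"
      let ?f = "\<lambda>s. z \<otimes> s \<otimes> inv z"
      have "?f ` S \<subseteq> S" using fwd by blast
      moreover have "inj_on ?f S"
      proof
        fix a b assume ab: "a \<in> S" "b \<in> S" "?f a = ?f b"
        have ac: "a \<in> carrier G" "b \<in> carrier G" using ab SG by blast+
        have "z \<otimes> a = z \<otimes> b" using ab(3) ac zc r_cancel[of "inv z" "z \<otimes> a" "z \<otimes> b"] by simp
        thus "a = b" using ac zc by simp
      qed
      ultimately have "?f ` S = S" using endo_inj_surj finS by blast
      then obtain s' where s': "s' \<in> S" "s = z \<otimes> s' \<otimes> inv z" using s by force
      have s'c: "s' \<in> carrier G" using s' SG by blast
      have "inv z \<otimes> s \<otimes> z = s'" using s' s'c zc by (simp add: m_assoc[symmetric], simp add: m_assoc)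
      thus "inv z \<otimes> s \<otimes> z \<in> S" using s' by simp
    qed
    have "z \<in> N" unfolding N_def using zc fwd bwd by blast
    thus False using z by blast
  qed
  show ?thesis
  proof -
    have "\<forall>x\<in>carrier G. \<forall>h\<in>S. x \<otimes> h \<otimes> inv x \<in> S" using NG unfolding N_def by blast
    thus ?thesis using normal_inv_iff S by blast
  qed
qed



lemma (in group) card_set_mult_triv:
  assumes "subgroup H G" "subgroup S G" "H \<inter> S \<subseteq> {\<one>}" "finite H" "finite S"
  shows "card (H <#> S) = card H * card S"
proof -
  have HG: "H \<subseteq> carrier G" using subgroup.subset[OF assms(1)] .
  have SG: "S \<subseteq> carrier G" using subgroup.subset[OF assms(2)] .
  have eq: "H <#> S = (\<lambda>(h,s). h \<otimes> s) ` (H \<times> S)"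
    unfolding set_mult_def by auto
  have "inj_on (\<lambda>(h,s). h \<otimes> s) (H \<times> S)"
  proof (rule inj_onI, clarify)
    fix h s h' s' assume a: "h \<in> H" "s \<in> S" "h' \<in> H" "s' \<in> S" "h \<otimes> s = h' \<otimes> s'"
    have c: "h \<in> carrier G" "s \<in> carrier G" "h' \<in> carrier G" "s' \<in> carrier G" using a HG SG by blast+
    have "inv h' \<otimes> h = s' \<otimes> inv s"
    proof -
      have "h = (h \<otimes> s) \<otimes> inv s" using c by (simp add: m_assoc)
      also have "\<dots> = (h' \<otimes> s') \<otimes> inv s" using a(5) by simp
      finally have "inv h' \<otimes> h = inv h' \<otimes> ((h' \<otimes> s') \<otimes> inv s)" by simp
      also have "\<dots> = (inv h' \<otimes> h') \<otimes> (s' \<otimes> inv s)" using c by (simp only: m_assoc inv_closed m_closed)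
      also have "\<dots> = s' \<otimes> inv s" using c by simp
      finally show ?thesis .
    qed
    moreover have "inv h' \<otimes> h \<in> H" using a subgroup.m_closed[OF assms(1)] subgroup.m_inv_closed[OF assms(1)] by blast
    moreover have "s' \<otimes> inv s \<in> S" using a subgroup.m_closed[OF assms(2)] subgroup.m_inv_closed[OF assms(2)] by blast
    ultimately have "inv h' \<otimes> h = \<one>" "s' \<otimes> inv s = \<one>" using assms(3) by auto
    moreover have "h' \<otimes> (inv h' \<otimes> h) = h" using c by (simp add: m_assoc[symmetric])
    moreover have "(s' \<otimes> inv s) \<otimes> s = s'" using c by (simp add: m_assoc)
    ultimately have "h = h'" "s' = s" using c by simp_all
    thus "h = h' \<and> s = s'" by simp
  qed
  hence "card (H <#> S) = card (H \<times> S)" unfolding eq by (rule card_image)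
  thus ?thesis by (simp add: card_cartesian_product)
qed

lemma (in group) inter_triv_coprime:
  assumes "subgroup H G" "subgroup S G" "finite H" "finite S" "coprime (card H) (card S)"
  shows "H \<inter> S \<subseteq> {\<one>}"
proof
  fix x assume x: "x \<in> H \<inter> S"
  have xc: "x \<in> carrier G" using x subgroup.subset[OF assms(1)] by blast
  have "x [^] card H = \<one>" using subgroup_pow_card[OF assms(1) assms(3)] x by blast
  moreover have "x [^] card S = \<one>" using subgroup_pow_card[OF assms(2) assms(4)] x by blast
  ultimately show "x \<in> {\<one>}" using pow_coprime_one[OF xc _ _ assms(5)] by simp
qed

lemma (in group) prod_normal:
  assumes fin: "finite (carrier G)" and nil: "upper_central G c = carrier G"
  shows "finite Q \<Longrightarrow> (\<forall>q\<in>Q. Factorial_Ring.prime (q::nat)) \<Longrightarrow>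
    \<exists>H. H \<lhd> G \<and> card H = (\<Prod>q\<in>Q. q ^ multiplicity q (order G))"
proof (induction Q rule: finite_induct)
  case empty
  then show ?case using one_is_normal by auto
next
  case (insert q Q)
  then obtain H where H: "H \<lhd> G" "card H = (\<Prod>q\<in>Q. q ^ multiplicity q (order G))" by auto
  have q: "Factorial_Ring.prime q" using insert by simp
  define e where "e = multiplicity q (order G)"
  have oG: "order G = q ^ e * (order G div q ^ e)" unfolding e_def by (simp add: multiplicity_dvd)
  have sy: "sylow G q e (order G div q ^ e)"
    unfolding sylow_eq sylow_axioms_def using oG q fin is_group by auto
  obtain S where S: "subgroup S G" "card S = q ^ e" using sylow.sylow_thm[OF sy] by blast
  have Sn: "S \<lhd> G" using sylow_normal[OF fin nil q S(1)] S(2) e_def by simp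
  have Hs: "subgroup H G" using normal_imp_subgroup[OF H(1)] .
  have finH: "finite H" using fin subgroup.subset[OF Hs] finite_subset by blast
  have finS: "finite S" using fin subgroup.subset[OF S(1)] finite_subset by blast
  have "coprime (card H) (card S)"
    unfolding H(2) S(2)
  proof (rule prod_coprime_left)
    fix i assume i: "i \<in> Q"
    hence "i \<noteq> q" using insert by blast
    moreover have "Factorial_Ring.prime i" using i insert by blast
    ultimately have "coprime i q" using q primes_coprime by blast
    thus "coprime (i ^ multiplicity i (order G)) (q ^ e)" by simp
  qed
  hence tr: "H \<inter> S \<subseteq> {\<one>}" using inter_triv_coprime[OF Hs S(1) finH finS] by blast
  have "H <#> S \<lhd> G" using normal_subgroup_set_mult_closed[OF H(1) Sn] .
  moreover have "card (H <#> S) = (\<Prod>q\<in>insert q Q. q ^ multiplicity q (order G))"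
    using card_set_mult_triv[OF Hs S(1) tr finH finS] H(2) S(2) e_def insert by simp
  ultimately show ?case by blast
qed



lemma order_decomp:
  fixes n p :: nat
  assumes "n > 0" "Factorial_Ring.prime p"
  shows "n = p ^ multiplicity p n * (\<Prod>q\<in>prime_factors n - {p}. q ^ multiplicity q n)"
proof (cases "p \<in> prime_factors n")
  case True
  have "n = (\<Prod>q\<in>prime_factors n. q ^ multiplicity q n)" using prime_factorization_nat[OF assms(1)] .
  also have "\<dots> = p ^ multiplicity p n * (\<Prod>q\<in>prime_factors n - {p}. q ^ multiplicity q n)"
    using True by (simp add: prod.remove)
  finally show ?thesis .
next
  case False
  hence "\<not> p dvd n" using assms by (simp add: in_prime_factors_iff)
  hence "multiplicity p n = 0" by (rule not_dvd_imp_multiplicity_0)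
  moreover have "prime_factors n - {p} = prime_factors n" using False by blast
  ultimately show ?thesis using prime_factorization_nat[OF assms(1)] by simp
qed

lemma rest_coprime:
  fixes n p :: nat
  assumes "Factorial_Ring.prime p"
  shows "coprime (\<Prod>q\<in>prime_factors n - {p}. q ^ multiplicity q n) p"
proof (rule prod_coprime_left)
  fix i assume i: "i \<in> prime_factors n - {p}"
  hence "Factorial_Ring.prime i" "i \<noteq> p" by auto
  hence "coprime i p" using assms primes_coprime by blast
  thus "coprime (i ^ multiplicity i n) p" by simp
qed

lemma (in group) hall_decomp:
  assumes fin: "finite (carrier G)" and nil: "upper_central G c = carrier G"
    and p: "Factorial_Ring.prime (p::nat)"
  shows "\<exists>H n' m \<phi>. H \<lhd> G \<and> card H = n' \<and> coprime n' p \<and> order G = p ^ m * n'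
     \<and> H = {x \<in> carrier G. x [^] n' = \<one>} \<and> \<phi> \<in> hom G G \<and> \<phi> ` carrier G = H"
proof -
  define m where "m = multiplicity p (order G)"
  define n' where "n' = (\<Prod>q\<in>prime_factors (order G) - {p}. q ^ multiplicity q (order G))"
  have opos: "order G > 0" using fin order_gt_0_iff_finite by blast
  have oG: "order G = p ^ m * n'" unfolding m_def n'_def using order_decomp[OF opos p] .
  have cop: "coprime n' p" unfolding n'_def using rest_coprime[OF p] .
  have pQ: "\<forall>q\<in>prime_factors (order G) - {p}. Factorial_Ring.prime q" by auto
  obtain H where H: "H \<lhd> G" "card H = n'"
    using prod_normal[OF fin nil _ pQ] unfolding n'_def by blast
  have sy: "sylow G p m n'"
    unfolding sylow_eq sylow_axioms_def using oG p fin is_group by auto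
  obtain S where S: "subgroup S G" "card S = p ^ m" using sylow.sylow_thm[OF sy] by blast
  have Sn: "S \<lhd> G" using sylow_normal[OF fin nil p S(1)] S(2) m_def by simp
  have Hs: "subgroup H G" using normal_imp_subgroup[OF H(1)] .
  have HG: "H \<subseteq> carrier G" using subgroup.subset[OF Hs] .
  have SG: "S \<subseteq> carrier G" using subgroup.subset[OF S(1)] .
  have finH: "finite H" using fin HG finite_subset by blast
  have finS: "finite S" using fin SG finite_subset by blast
  have cop2: "coprime (card S) (card H)" using cop S(2) H(2) by (simp add: ac_simps)
  have tr: "S \<inter> H \<subseteq> {\<one>}" using inter_triv_coprime[OF S(1) Hs finS finH cop2] .
  have cSH: "card (S <#> H) = order G"
    using card_set_mult_triv[OF S(1) Hs tr finS finH] S(2) H(2) oG by simp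
  have SHc: "S <#> H = carrier G"
    using card_subset_eq[OF fin setmult_subset_G[OF SG HG]] cSH unfolding order_def by blast
  have decomp: "\<And>z. z \<in> carrier G \<Longrightarrow> \<exists>s\<in>S. \<exists>h\<in>H. z = s \<otimes> h"
    using SHc unfolding set_mult_def by blast
  have comm: "\<And>s h. s \<in> S \<Longrightarrow> h \<in> H \<Longrightarrow> s \<otimes> h = h \<otimes> s"
  proof -
    fix s h assume s: "s \<in> S" and h: "h \<in> H"
    have sc: "s \<in> carrier G" using s SG by blast
    have hc: "h \<in> carrier G" using h HG by blast
    define k where "k = s \<otimes> h \<otimes> inv s \<otimes> inv h"
    have "h \<otimes> inv s \<otimes> inv h \<in> S"
      using normal.inv_op_closed2[OF Sn hc subgroup.m_inv_closed[OF S(1) s]] .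
    hence "s \<otimes> (h \<otimes> inv s \<otimes> inv h) \<in> S" using subgroup.m_closed[OF S(1) s] by blast
    moreover have "k = s \<otimes> (h \<otimes> inv s \<otimes> inv h)" unfolding k_def using sc hc by (simp add: m_assoc)
    ultimately have kS: "k \<in> S" by simp
    have "s \<otimes> h \<otimes> inv s \<in> H" using normal.inv_op_closed2[OF H(1) sc h] .
    hence kH: "k \<in> H" unfolding k_def using subgroup.m_closed[OF Hs _ subgroup.m_inv_closed[OF Hs h]] by blast
    have "k = \<one>" using kS kH tr by blast
    hence "k \<otimes> (h \<otimes> s) = h \<otimes> s" using sc hc by simp
    moreover have "k \<otimes> (h \<otimes> s) = s \<otimes> h"
    proof -
      have c: "inv x \<otimes> (x \<otimes> y) = y" if "x \<in> carrier G" "y \<in> carrier G" for x y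
        using that by (simp add: m_assoc[symmetric])
      show ?thesis unfolding k_def using sc hc by (simp add: m_assoc c)
    qed
    ultimately show "s \<otimes> h = h \<otimes> s" by simp
  qed
  have "p ^ m \<noteq> 0" using p by (simp add: prime_gt_0_nat)
  then obtain a b where ab: "p ^ m * a = n' * b + gcd (p ^ m) n'" using bezout_nat by blast
  have "gcd (p ^ m) n' = 1" using cop by (simp add: ac_simps)
  hence ab: "p ^ m * a = n' * b + 1" using ab by simp
  define u where "u = p ^ m * a"
  define \<phi> where "\<phi> = (\<lambda>z. z [^] u)"
  have sp: "\<And>s. s \<in> S \<Longrightarrow> s [^] u = \<one>"
  proof -
    fix s assume s: "s \<in> S"
    have sc: "s \<in> carrier G" using s SG by blast
    have "s [^] (p ^ m) = \<one>" using subgroup_pow_card[OF S(1) finS s] S(2) by simp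
    thus "s [^] u = \<one>" unfolding u_def using nat_pow_pow[OF sc, symmetric] by simp
  qed
  have hp: "\<And>h. h \<in> H \<Longrightarrow> h [^] u = h"
  proof -
    fix h assume h: "h \<in> H"
    have hc: "h \<in> carrier G" using h HG by blast
    have "h [^] n' = \<one>" using subgroup_pow_card[OF Hs finH h] H(2) by simp
    hence "h [^] (n' * b) = \<one>" using nat_pow_pow[OF hc, symmetric] by simp
    moreover have "h [^] (n' * b + 1) = h [^] (n' * b) \<otimes> h [^] (1::nat)"
      by (rule nat_pow_mult[OF hc, symmetric])
    ultimately show "h [^] u = h" unfolding u_def ab using hc by simp
  qed
  have key: "\<And>s h. s \<in> S \<Longrightarrow> h \<in> H \<Longrightarrow> \<phi> (s \<otimes> h) = h"
  proof -
    fix s h assume s: "s \<in> S" and h: "h \<in> H"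
    have sc: "s \<in> carrier G" using s SG by blast
    have hc: "h \<in> carrier G" using h HG by blast
    have "\<phi> (s \<otimes> h) = s [^] u \<otimes> h [^] u" unfolding \<phi>_def
      using pow_mult_distrib[OF comm[OF s h] sc hc] .
    thus "\<phi> (s \<otimes> h) = h" using sp[OF s] hp[OF h] hc by simp
  qed
  have hom: "\<phi> \<in> hom G G"
  proof (rule homI)
    fix x assume "x \<in> carrier G"
    thus "\<phi> x \<in> carrier G" unfolding \<phi>_def by simp
  next
    fix x y assume x: "x \<in> carrier G" and y: "y \<in> carrier G"
    obtain s1 h1 where 1: "s1 \<in> S" "h1 \<in> H" "x = s1 \<otimes> h1" using decomp[OF x] by blast
    obtain s2 h2 where 2: "s2 \<in> S" "h2 \<in> H" "y = s2 \<otimes> h2" using decomp[OF y] by blast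
    have c: "s1 \<in> carrier G" "h1 \<in> carrier G" "s2 \<in> carrier G" "h2 \<in> carrier G"
      using 1 2 SG HG by blast+
    have "x \<otimes> y = s1 \<otimes> (h1 \<otimes> s2) \<otimes> h2" using 1 2 c by (simp add: m_assoc)
    also have "\<dots> = s1 \<otimes> (s2 \<otimes> h1) \<otimes> h2" using comm[OF 2(1) 1(2)] by simp
    also have "\<dots> = (s1 \<otimes> s2) \<otimes> (h1 \<otimes> h2)" using c by (simp add: m_assoc)
    finally have "\<phi> (x \<otimes> y) = h1 \<otimes> h2"
      using key subgroup.m_closed[OF S(1) 1(1) 2(1)] subgroup.m_closed[OF Hs 1(2) 2(2)] by simp
    moreover have "\<phi> x = h1" "\<phi> y = h2" using key 1 2 by simp_all
    ultimately show "\<phi> (x \<otimes> y) = \<phi> x \<otimes> \<phi> y" by simp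
  qed
  have img: "\<phi> ` carrier G = H"
  proof
    show "\<phi> ` carrier G \<subseteq> H"
    proof
      fix w assume "w \<in> \<phi> ` carrier G"
      then obtain x where x: "x \<in> carrier G" "w = \<phi> x" by blast
      obtain s h where "s \<in> S" "h \<in> H" "x = s \<otimes> h" using decomp[OF x(1)] by blast
      thus "w \<in> H" using key x by simp
    qed
    show "H \<subseteq> \<phi> ` carrier G"
    proof
      fix h assume h: "h \<in> H"
      have hc: "h \<in> carrier G" using h HG by blast
      have "\<phi> (\<one> \<otimes> h) = h" using key[OF subgroup.one_closed[OF S(1)] h] .
      hence "\<phi> h = h" using hc by simp
      thus "h \<in> \<phi> ` carrier G" using hc by force
    qed
  qed
  have Heq: "H = {x \<in> carrier G. x [^] n' = \<one>}"
  proof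
    show "H \<subseteq> {x \<in> carrier G. x [^] n' = \<one>}"
      using subgroup_pow_card[OF Hs finH] H(2) HG by blast
    show "{x \<in> carrier G. x [^] n' = \<one>} \<subseteq> H"
    proof
      fix x assume x: "x \<in> {x \<in> carrier G. x [^] n' = \<one>}"
      obtain s h where sh: "s \<in> S" "h \<in> H" "x = s \<otimes> h" using decomp x by blast
      have sc: "s \<in> carrier G" using sh SG by blast
      have hc: "h \<in> carrier G" using sh HG by blast
      have "h [^] n' = \<one>" using subgroup_pow_card[OF Hs finH sh(2)] H(2) by simp
      moreover have "x [^] n' = s [^] n' \<otimes> h [^] n'"
        using sh pow_mult_distrib[OF comm[OF sh(1) sh(2)] sc hc] by simp
      ultimately have 1: "s [^] n' = \<one>" using x sc by simp
      have 2: "s [^] (p ^ m) = \<one>" using subgroup_pow_card[OF S(1) finS sh(1)] S(2) by simp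
      have "s = \<one>" using pow_coprime_one[OF sc 1 2] cop by (simp add: ac_simps)
      thus "x \<in> H" using sh hc by simp
    qed
  qed
  show ?thesis using H(1) H(2) cop oG Heq hom img by blast
qed



lemma (in group) upper_central_sub:
  assumes "subgroup A G"
  shows "upper_central G i \<inter> A \<subseteq> upper_central (G\<lparr>carrier := A\<rparr>) i"
proof (induction i)
  case 0
  then show ?case by auto
next
  case (Suc i)
  show ?case
  proof
    fix x assume x: "x \<in> upper_central G (Suc i) \<inter> A"
    have xA: "x \<in> A" using x by blast
    have AG: "A \<subseteq> carrier G" using subgroup.subset[OF assms] .
    have xc: "x \<in> carrier G" using xA AG by blast
    have all: "\<forall>y\<in>carrier G. x \<otimes> y \<otimes> inv x \<otimes> inv y \<in> upper_central G i" using x by simp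
    have "\<forall>y\<in>A. x \<otimes> y \<otimes> inv\<^bsub>G\<lparr>carrier := A\<rparr>\<^esub> x \<otimes> inv\<^bsub>G\<lparr>carrier := A\<rparr>\<^esub> y \<in> upper_central (G\<lparr>carrier := A\<rparr>) i"
    proof
      fix y assume yA: "y \<in> A"
      have yc: "y \<in> carrier G" using yA AG by blast
      have i1: "inv\<^bsub>G\<lparr>carrier := A\<rparr>\<^esub> x = inv x" using m_inv_consistent[OF assms xA] .
      have i2: "inv\<^bsub>G\<lparr>carrier := A\<rparr>\<^esub> y = inv y" using m_inv_consistent[OF assms yA] .
      have "x \<otimes> y \<otimes> inv x \<otimes> inv y \<in> upper_central G i" using all yc by blast
      moreover have "x \<otimes> y \<otimes> inv x \<otimes> inv y \<in> A"
        using xA yA subgroup.m_closed[OF assms] subgroup.m_inv_closed[OF assms] by meson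
      ultimately have "x \<otimes> y \<otimes> inv x \<otimes> inv y \<in> upper_central (G\<lparr>carrier := A\<rparr>) i" using Suc by blast
      thus "x \<otimes> y \<otimes> inv\<^bsub>G\<lparr>carrier := A\<rparr>\<^esub> x \<otimes> inv\<^bsub>G\<lparr>carrier := A\<rparr>\<^esub> y \<in> upper_central (G\<lparr>carrier := A\<rparr>) i"
        using i1 i2 by simp
    qed
    thus "x \<in> upper_central (G\<lparr>carrier := A\<rparr>) (Suc i)" using xA by simp
  qed
qed

lemma (in group) upper_central_carrier:
  "upper_central G i \<subseteq> carrier G"
  by (cases i) auto

lemma (in group) main_core:
  assumes fin: "finite (carrier G)" and p: "Factorial_Ring.prime (p::nat)"
    and At: "At \<lhd> G" and J: "card (rcosets At) \<le> J"
    and nil: "upper_central (G\<lparr>carrier := At\<rparr>) c = At"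
  shows "\<exists>A. A \<lhd> G \<and> min_gens G A \<le> min_gens G At \<and> coprime (card A) p
           \<and> card (rcosets A) \<le> J * p ^ multiplicity p (order G) \<and> A \<subseteq> At \<and> subgroup A G"
proof -
  define K where "K = G\<lparr>carrier := At\<rparr>"
  have AtS: "subgroup At G" using normal_imp_subgroup[OF At] .
  have AtG: "At \<subseteq> carrier G" using subgroup.subset[OF AtS] .
  have gK: "group K" unfolding K_def using subgroup.subgroup_is_group[OF AtS is_group] .
  have finK: "finite (carrier K)" unfolding K_def using fin AtG finite_subset by auto
  have nilK: "upper_central K c = carrier K" unfolding K_def using nil by simp
  obtain H n' m \<phi> where H: "H \<lhd> K" "card H = n'" "coprime n' p" "order K = p ^ m * n'"
     "H = {x \<in> carrier K. x [^]\<^bsub>K\<^esub> n' = \<one>\<^bsub>K\<^esub>}" "\<phi> \<in> hom K K" "\<phi> ` carrier K = H"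
    using group.hall_decomp[OF gK finK nilK p] by blast
  have Heq: "H = {x \<in> At. x [^] n' = \<one>}" using H(5) unfolding K_def by (simp add: nat_pow_consistent[symmetric])
  have HAt: "H \<subseteq> At" using Heq by blast
  have HS: "subgroup H G"
  proof -
    have "subgroup H K" using normal_imp_subgroup[OF H(1)] .
    hence "group (K\<lparr>carrier := H\<rparr>)" using subgroup.subgroup_is_group[OF _ gK] by blast
    hence "group (G\<lparr>carrier := H\<rparr>)" unfolding K_def by simp
    thus ?thesis using group_incl_imp_subgroup HAt AtG by blast
  qed
  have HN: "H \<lhd> G"
  proof -
    have "\<forall>x\<in>carrier G. \<forall>h\<in>H. x \<otimes> h \<otimes> inv x \<in> H"
    proof (intro ballI)
      fix x h assume x: "x \<in> carrier G" and h: "h \<in> H"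
      have hA: "h \<in> At" "h [^] n' = \<one>" using h Heq by auto
      have hc: "h \<in> carrier G" using hA AtG by blast
      have "x \<otimes> h \<otimes> inv x \<in> At" using normal.inv_op_closed2[OF At x hA(1)] .
      moreover have "(x \<otimes> h \<otimes> inv x) [^] n' = \<one>" using conj_pow[OF x hc] hA x by simp
      ultimately show "x \<otimes> h \<otimes> inv x \<in> H" using Heq by blast
    qed
    thus ?thesis using normal_inv_iff HS by blast
  qed
  have oK: "order K = card At" unfolding K_def order_def by simp
  have finAt: "finite At" using fin AtG finite_subset by blast
  have finH: "finite H" using finAt HAt finite_subset by blast
  have n'pos: "n' > 0" using card_gt_0_iff[of H] finH subgroup.one_closed[OF HS] H(2) by auto
  have idx: "card (rcosets H) \<le> J * p ^ multiplicity p (order G)"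
  proof -
    have l1: "card (rcosets H) * n' = order G" using lagrange[OF HS] H(2) by simp
    have l2: "card (rcosets At) * (p ^ m * n') = order G" using lagrange[OF AtS] H(4) oK by simp
    hence "card (rcosets H) * n' = (card (rcosets At) * p ^ m) * n'" using l1 by (simp add: ac_simps)
    hence e: "card (rcosets H) = card (rcosets At) * p ^ m" using n'pos by simp
    have "p ^ m dvd card (rcosets At) * (p ^ m * n')" by simp
    hence "p ^ m dvd order G" using l2 by simp
    moreover have "order G \<noteq> 0"
    proof -
      have "order G > 0" using order_gt_0_iff_finite fin by blast
      thus ?thesis by simp
    qed
    ultimately have "m \<le> multiplicity p (order G)"
      using multiplicity_geI[of "order G" p m] not_prime_unit p by blast
    hence "p ^ m \<le> p ^ multiplicity p (order G)" using p by (meson power_increasing prime_ge_1_nat)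
    thus ?thesis using e J by (simp add: mult_le_mono)
  qed
  have mg: "min_gens G H \<le> min_gens G At"
  proof -
    have ex: "\<exists>S. finite S \<and> S \<subseteq> At \<and> card S = card At \<and> generate G S = At"
    proof (intro exI conjI)
      show "generate G At = At"
      proof
        show "generate G At \<subseteq> At" by (rule generate_subgroup_incl[OF order_refl AtS])
        show "At \<subseteq> generate G At"
        proof
          fix x assume "x \<in> At" thus "x \<in> generate G At" by (rule generate.incl)
        qed
      qed
    qed (use finAt in auto)
    define d where "d = min_gens G At"
    have ex2: "\<exists>n S. finite S \<and> S \<subseteq> At \<and> card S = n \<and> generate G S = At" using ex by blast
    have "\<exists>S. finite S \<and> S \<subseteq> At \<and> card S = d \<and> generate G S = At"
      unfolding d_def min_gens_def by (rule LeastI_ex[OF ex2])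
    then obtain S where S: "finite S" "S \<subseteq> At" "card S = d" "generate G S = At" by blast
    have gh: "group_hom K K \<phi>" using gK H(6) unfolding group_hom_def group_hom_axioms_def by simp
    have SK: "S \<subseteq> carrier K" using S(2) unfolding K_def by simp
    have "generate K (\<phi> ` S) = \<phi> ` generate K S" using group_hom.generate_img[OF gh SK] .
    moreover have "generate K S = generate G S" unfolding K_def using generate_consistent[OF S(2) AtS] .
    moreover have imgAt: "\<phi> ` S \<subseteq> At"
    proof -
      have "\<phi> ` S \<subseteq> \<phi> ` carrier K" using SK by blast
      thus ?thesis using H(7) HAt by blast
    qed
    moreover have "generate K (\<phi> ` S) = generate G (\<phi> ` S)"
      unfolding K_def using generate_consistent[OF imgAt AtS] .
    ultimately have gen: "generate G (\<phi> ` S) = H" using S(4) H(7) unfolding K_def by simp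
    have sub: "\<phi> ` S \<subseteq> H" using SK H(7) by blast
    have "min_gens G H \<le> card (\<phi> ` S)"
      unfolding min_gens_def by (rule Least_le) (use S(1) sub gen in blast)
    also have "\<dots> \<le> card S" using card_image_le[OF S(1)] .
    finally show ?thesis using S(3) d_def by simp
  qed
  show ?thesis using HN mg H(2) H(3) idx HAt HS by blast
qed



lemma (in group) lemma2p5_core:
  fixes p J c :: nat
  assumes "Factorial_Ring.prime p" and "J > 0"
    and "finite (carrier G)"
    and "At \<lhd> G" and "card (rcosets\<^bsub>G\<^esub> At) \<le> J"
  shows "((\<forall>x\<in>At. \<forall>y\<in>At. x \<otimes>\<^bsub>G\<^esub> y = y \<otimes>\<^bsub>G\<^esub> x) \<longrightarrow>
           (\<exists>A. A \<lhd> G \<and> min_gens G A \<le> min_gens G At \<and> coprime (card A) p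
              \<and> card (rcosets\<^bsub>G\<^esub> A) \<le> J * p ^ multiplicity p (order G)
              \<and> (\<forall>x\<in>A. \<forall>y\<in>A. x \<otimes>\<^bsub>G\<^esub> y = y \<otimes>\<^bsub>G\<^esub> x)))
       \<and> (nilpotent_class_le (G\<lparr>carrier := At\<rparr>) c \<longrightarrow>
           (\<exists>A. A \<lhd> G \<and> min_gens G A \<le> min_gens G At \<and> coprime (card A) p
              \<and> card (rcosets\<^bsub>G\<^esub> A) \<le> J * p ^ multiplicity p (order G)
              \<and> nilpotent_class_le (G\<lparr>carrier := A\<rparr>) c))"
proof -
  have AtS: "subgroup At G" using normal_imp_subgroup[OF assms(4)] .
  have AtG: "At \<subseteq> carrier G" using subgroup.subset[OF AtS] .
  have gK: "group (G\<lparr>carrier := At\<rparr>)" using subgroup.subgroup_is_group[OF AtS is_group] .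
  show ?thesis
  proof (intro conjI impI)
    assume comm: "\<forall>x\<in>At. \<forall>y\<in>At. x \<otimes> y = y \<otimes> x"
    have "upper_central (G\<lparr>carrier := At\<rparr>) (Suc 0) = At"
    proof -
      have "\<forall>x\<in>At. \<forall>y\<in>At. x \<otimes> y \<otimes> inv\<^bsub>G\<lparr>carrier := At\<rparr>\<^esub> x \<otimes> inv\<^bsub>G\<lparr>carrier := At\<rparr>\<^esub> y = \<one>"
      proof (intro ballI)
        fix x y assume x: "x \<in> At" and y: "y \<in> At"
        have xc: "x \<in> carrier G" and yc: "y \<in> carrier G" using x y AtG by blast+
        have "x \<otimes> y \<otimes> inv\<^bsub>G\<lparr>carrier := At\<rparr>\<^esub> x \<otimes> inv\<^bsub>G\<lparr>carrier := At\<rparr>\<^esub> y = x \<otimes> y \<otimes> inv x \<otimes> inv y"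
          using m_inv_consistent[OF AtS x] m_inv_consistent[OF AtS y] by simp
        also have "\<dots> = y \<otimes> x \<otimes> inv x \<otimes> inv y" using comm x y by simp
        also have "\<dots> = \<one>" using xc yc by (simp add: m_assoc)
        finally show "x \<otimes> y \<otimes> inv\<^bsub>G\<lparr>carrier := At\<rparr>\<^esub> x \<otimes> inv\<^bsub>G\<lparr>carrier := At\<rparr>\<^esub> y = \<one>" .
      qed
      thus ?thesis by auto
    qed
    then obtain A where A: "A \<lhd> G" "min_gens G A \<le> min_gens G At" "coprime (card A) p"
        "card (rcosets A) \<le> J * p ^ multiplicity p (order G)" "A \<subseteq> At"
      using main_core[OF assms(3) assms(1) assms(4) assms(5)] by blast
    have "\<forall>x\<in>A. \<forall>y\<in>A. x \<otimes> y = y \<otimes> x" using comm A(5) by blast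
    thus "\<exists>A. A \<lhd> G \<and> min_gens G A \<le> min_gens G At \<and> coprime (card A) p
              \<and> card (rcosets A) \<le> J * p ^ multiplicity p (order G)
              \<and> (\<forall>x\<in>A. \<forall>y\<in>A. x \<otimes> y = y \<otimes> x)" using A by blast
  next
    assume nil: "nilpotent_class_le (G\<lparr>carrier := At\<rparr>) c"
    hence nil2: "upper_central (G\<lparr>carrier := At\<rparr>) c = At" unfolding nilpotent_class_le_def by simp
    obtain A where A: "A \<lhd> G" "min_gens G A \<le> min_gens G At" "coprime (card A) p"
        "card (rcosets A) \<le> J * p ^ multiplicity p (order G)" "A \<subseteq> At" "subgroup A G"
      using main_core[OF assms(3) assms(1) assms(4) assms(5) nil2] by blast
    have AK: "subgroup A (G\<lparr>carrier := At\<rparr>)" using subgroup_incl[OF A(6) AtS A(5)] .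
    have gA: "group (G\<lparr>carrier := A\<rparr>)" using subgroup.subgroup_is_group[OF A(6) is_group] .
    have "upper_central (G\<lparr>carrier := At\<rparr>) c \<inter> A \<subseteq> upper_central ((G\<lparr>carrier := At\<rparr>)\<lparr>carrier := A\<rparr>) c"
      using group.upper_central_sub[OF gK AK] .
    hence "A \<subseteq> upper_central (G\<lparr>carrier := A\<rparr>) c" using nil2 A(5) by auto
    moreover have "upper_central (G\<lparr>carrier := A\<rparr>) c \<subseteq> A"
      using group.upper_central_carrier[OF gA] by simp
    ultimately have "nilpotent_class_le (G\<lparr>carrier := A\<rparr>) c" unfolding nilpotent_class_le_def by auto
    thus "\<exists>A. A \<lhd> G \<and> min_gens G A \<le> min_gens G At \<and> coprime (card A) p
              \<and> card (rcosets A) \<le> J * p ^ multiplicity p (order G)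
              \<and> nilpotent_class_le (G\<lparr>carrier := A\<rparr>) c" using A by blast
  qed
qed


theorem lemma2p5:
  fixes G :: "('a, 'b) monoid_scheme" and p J c :: nat and At :: "'a set"
  assumes "Factorial_Ring.prime p" and "J > 0"
    and "group G" and "finite (carrier G)"
    and "At \<lhd> G" and "card (rcosets\<^bsub>G\<^esub> At) \<le> J"
  shows "((\<forall>x\<in>At. \<forall>y\<in>At. x \<otimes>\<^bsub>G\<^esub> y = y \<otimes>\<^bsub>G\<^esub> x) \<longrightarrow>
           (\<exists>A. A \<lhd> G \<and> min_gens G A \<le> min_gens G At \<and> coprime (card A) p
              \<and> card (rcosets\<^bsub>G\<^esub> A) \<le> J * p ^ multiplicity p (order G)
              \<and> (\<forall>x\<in>A. \<forall>y\<in>A. x \<otimes>\<^bsub>G\<^esub> y = y \<otimes>\<^bsub>G\<^esub> x)))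
       \<and> (nilpotent_class_le (G\<lparr>carrier := At\<rparr>) c \<longrightarrow>
           (\<exists>A. A \<lhd> G \<and> min_gens G A \<le> min_gens G At \<and> coprime (card A) p
              \<and> card (rcosets\<^bsub>G\<^esub> A) \<le> J * p ^ multiplicity p (order G)
              \<and> nilpotent_class_le (G\<lparr>carrier := A\<rparr>) c))"
  using group.lemma2p5_core[OF assms(3) assms(1) assms(2) assms(4) assms(5) assms(6)] by blast

end
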